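(* Let $\mathbb{F}\subset\mathbb{C}$ be a field, let $n\in\mathbb{N}$, let $\alpha_1,\ldots,\alpha_n$ be non-negative integers, and let $F\colon\mathbb{F}^n\to\mathbb{C}$ be a symmetric $n$-additive function. Then the function $g\colon\mathbb{F}\to\mathbb{C}$ defined by \[ g(x)=F(x^{\alpha_1},\ldots,x^{\alpha_n})\qquad(x\in\mathbb{F}) \] (with the convention $x^0=1$) is a generalized monomial of degree $\alpha_1+\cdots+\alpha_n$.
   Context: A function $A\colon\mathbb{F}^k\to\mathbb{C}$ is $k$-additive if it is additive (with respect to the additive group of $\mathbb{F}$) in each variable; a $0$-additive function is a constant. A function $f\colon\mathbb{F}\to\mathbb{C}$ is a generalized monomial of degree $k$ if there is a symmetric $k$-additive $A\colon\mathbb{F}^k\to\mathbb{C}$ with $f(x)=A(x,\ldots,x)$ for all $x\in\mathbb{F}$. *)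

theory Defs
  imports Complex_Main "HOL-Library.Multiset"
begin

definition complex_subfield :: "complex set \<Rightarrow> bool" where
  "complex_subfield K \<longleftrightarrow> 0 \<in> K \<and> 1 \<in> K \<and>
     (\<forall>x\<in>K. \<forall>y\<in>K. x + y \<in> K \<and> x * y \<in> K \<and> x - y \<in> K) \<and>
     (\<forall>x\<in>K. x \<noteq> 0 \<longrightarrow> inverse x \<in> K)"

text \<open>Points of K^k are represented as lists of length k with entries in K.\<close>
definition tuples :: "complex set \<Rightarrow> nat \<Rightarrow> complex list set" where
  "tuples K k = {xs. length xs = k \<and> set xs \<subseteq> K}"

definition k_additive :: "complex set \<Rightarrow> nat \<Rightarrow> (complex list \<Rightarrow> complex) \<Rightarrow> bool" where
  "k_additive K k A \<longleftrightarrow>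
     (\<forall>xs\<in>tuples K k. \<forall>i<k. \<forall>a\<in>K. \<forall>b\<in>K.
        A (xs[i := a + b]) = A (xs[i := a]) + A (xs[i := b]))"

definition symmetric_on :: "complex set \<Rightarrow> nat \<Rightarrow> (complex list \<Rightarrow> complex) \<Rightarrow> bool" where
  "symmetric_on K k A \<longleftrightarrow>
     (\<forall>xs\<in>tuples K k. \<forall>ys\<in>tuples K k. mset xs = mset ys \<longrightarrow> A xs = A ys)"

definition generalized_monomial :: "complex set \<Rightarrow> nat \<Rightarrow> (complex \<Rightarrow> complex) \<Rightarrow> bool" where
  "generalized_monomial K k f \<longleftrightarrow>
     (\<exists>A. symmetric_on K k A \<and> k_additive K k A \<and>
          (\<forall>x\<in>K. f x = A (replicate k x)))"

end

theory Submission
  imports Defs "HOL-Combinatorics.Permutations"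
begin

definition ss :: "nat list \<Rightarrow> nat \<Rightarrow> nat" where
  "ss al i = sum_list (take i al)"

definition GG :: "nat list \<Rightarrow> nat \<Rightarrow> nat set" where
  "GG al i = {ss al i ..< ss al (Suc i)}"

lemma ss_mono: "i \<le> j \<Longrightarrow> ss al i \<le> ss al j"
proof -
  assume "i \<le> j"
  then obtain m where "j = i + m" using le_Suc_ex by blast
  then show ?thesis by (simp add: ss_def take_add)
qed

lemma ss_len: "ss al (length al) = sum_list al"
  by (simp add: ss_def)

lemma ss_Suc: "i < length al \<Longrightarrow> ss al (Suc i) = ss al i + al ! i"
  by (simp add: ss_def take_Suc_conv_app_nth)

lemma ss_0: "ss al 0 = 0" by (simp add: ss_def)

lemma card_GG: "i < length al \<Longrightarrow> card (GG al i) = al ! i"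
  by (simp add: GG_def ss_Suc)

lemma GG_sub: "i < length al \<Longrightarrow> GG al i \<subseteq> {..<sum_list al}"
  using ss_mono[of "Suc i" "length al" al] by (auto simp: GG_def ss_len)

lemma GG_disj: "i < j \<Longrightarrow> q \<in> GG al i \<Longrightarrow> q \<notin> GG al j"
  using ss_mono[of "Suc i" j al] by (auto simp: GG_def)

lemma GG_disj': "i \<noteq> j \<Longrightarrow> q \<in> GG al i \<Longrightarrow> q \<notin> GG al j"
  by (metis GG_disj linorder_neqE_nat)

lemma GG_ex: assumes "q < sum_list al" shows "\<exists>i<length al. q \<in> GG al i"
proof -
  have ne: "length al > 0" using assms by (cases al) auto
  define L where "L = (LEAST l. q < ss al (Suc l))"
  have ex: "q < ss al (Suc (length al - 1))" using ne assms ss_len[of al] by simp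
  have "L \<le> length al - 1" unfolding L_def by (rule Least_le) (rule ex)
  hence Llt: "L < length al" using ne by linarith
  have up: "q < ss al (Suc L)" unfolding L_def by (rule LeastI) (rule ex)
  have lo: "ss al L \<le> q"
  proof (cases L)
    case 0 then show ?thesis by (simp add: ss_0)
  next
    case (Suc m)
    have "\<not> q < ss al (Suc m)" unfolding Suc[symmetric]
      using not_less_Least[of m "\<lambda>l. q < ss al (Suc l)"] Suc L_def by simp
    then show ?thesis using Suc by simp
  qed
  show ?thesis using Llt up lo by (auto simp: GG_def)
qed

lemma prod_in:
  assumes K: "complex_subfield K" and "\<forall>j\<in>S. f j \<in> K"
  shows "prod f S \<in> K"
proof (cases "finite S")
  case True
  then show ?thesis using assms(2)
  proof (induction S rule: finite_induct)
    case empty then show ?case using K by (simp add: complex_subfield_def)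
  next
    case (insert x F) then show ?case using K by (simp add: complex_subfield_def)
  qed
next
  case False then show ?thesis using K by (simp add: complex_subfield_def)
qed

theorem lemma3:
  fixes K :: "complex set" and n :: nat and alpha :: "nat list"
    and F :: "complex list \<Rightarrow> complex"
  assumes "complex_subfield K"
    and "length alpha = n"
    and "symmetric_on K n F" and "k_additive K n F"
  shows "generalized_monomial K (sum_list alpha) (\<lambda>x. F (map (\<lambda>a. x ^ a) alpha))"
proof -
  note K = assms(1)
  define k where "k = sum_list alpha"
  define P where "P = (\<lambda>y::nat\<Rightarrow>complex. map (\<lambda>i. \<Prod>j\<in>GG alpha i. y j) [0..<n])"
  define PS where "PS = {\<sigma>. \<sigma> permutes {..<k}}"
  define A where "A = (\<lambda>ys::complex list. (\<Sum>\<sigma>\<in>PS. F (P (\<lambda>j. ys ! \<sigma> j))) / of_nat (fact k))"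
  have finPS: "finite PS" unfolding PS_def by (simp add: finite_permutations)
  have Pin: "P y \<in> tuples K n" if "\<forall>j<k. y j \<in> K" for y
  proof -
    have "(\<Prod>j\<in>GG alpha i. y j) \<in> K" if "i < n" for i
    proof (rule prod_in[OF K], rule ballI)
      fix j assume "j \<in> GG alpha i"
      then show "y j \<in> K" using GG_sub[of i alpha] that \<open>\<forall>j<k. y j \<in> K\<close> assms(2) k_def by auto
    qed
    then show ?thesis by (auto simp: P_def tuples_def)
  qed
  have Pupd: "P (y(q:=v)) = (P y)[i0 := v * (\<Prod>j\<in>GG alpha i0 - {q}. y j)]"
    if "i0 < n" "q \<in> GG alpha i0" for y q v i0
  proof (rule nth_equalityI)
    show "length (P (y(q := v))) = length ((P y)[i0 := v * (\<Prod>j\<in>GG alpha i0 - {q}. y j)])"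
      by (simp add: P_def)
  next
    fix i assume "i < length (P (y(q := v)))"
    hence i: "i < n" by (simp add: P_def)
    show "P (y(q := v)) ! i = (P y)[i0 := v * (\<Prod>j\<in>GG alpha i0 - {q}. y j)] ! i"
    proof (cases "i = i0")
      case True
      have fin: "finite (GG alpha i0)" by (simp add: GG_def)
      have "(\<Prod>j\<in>GG alpha i0. (y(q:=v)) j) = (y(q:=v)) q * (\<Prod>j\<in>GG alpha i0 - {q}. (y(q:=v)) j)"
        by (rule prod.remove[OF fin that(2)])
      also have "(\<Prod>j\<in>GG alpha i0 - {q}. (y(q:=v)) j) = (\<Prod>j\<in>GG alpha i0 - {q}. y j)"
        by (rule prod.cong) auto
      finally show ?thesis using True i by (simp add: P_def)
    next
      case False
      have "q \<notin> GG alpha i" using GG_disj'[OF _ that(2)] False by metis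
      hence "(\<Prod>j\<in>GG alpha i. (y(q:=v)) j) = (\<Prod>j\<in>GG alpha i. y j)"
        by (intro prod.cong) auto
      then show ?thesis using False i by (simp add: P_def)
    qed
  qed
  have addF: "\<And>xs i a b. xs \<in> tuples K n \<Longrightarrow> i < n \<Longrightarrow> a \<in> K \<Longrightarrow> b \<in> K \<Longrightarrow>
      F (xs[i := a + b]) = F (xs[i := a]) + F (xs[i := b])"
    using assms(4) unfolding k_additive_def by blast
  have sym: "symmetric_on K k A"
    unfolding symmetric_on_def
  proof (intro ballI impI)
    fix xs ys assume xs: "xs \<in> tuples K k" and ys: "ys \<in> tuples K k" and m: "mset xs = mset ys"
    obtain p where p: "p permutes {..<length ys}" "permute_list p ys = xs"
      using mset_eq_permutation[OF m] by blast
    have ly: "length ys = k" using ys by (simp add: tuples_def)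
    have xsn: "xs ! j = ys ! p j" if "j < k" for j
      using permute_list_nth[OF p(1)] p(2) that ly by auto
    have "(\<Sum>\<sigma>\<in>PS. F (P (\<lambda>j. ys ! \<sigma> j))) = (\<Sum>\<sigma>\<in>PS. F (P (\<lambda>j. ys ! (p \<circ> \<sigma>) j)))"
      unfolding PS_def using setum_permutations_compose_left[OF p(1)[unfolded ly], of "\<lambda>\<sigma>. F (P (\<lambda>j. ys ! \<sigma> j))"] by simp
    also have "\<dots> = (\<Sum>\<sigma>\<in>PS. F (P (\<lambda>j. xs ! \<sigma> j)))"
    proof (rule sum.cong[OF refl])
      fix \<sigma> assume "\<sigma> \<in> PS"
      hence s: "\<sigma> permutes {..<k}" by (simp add: PS_def)
      have "P (\<lambda>j. ys ! (p \<circ> \<sigma>) j) = P (\<lambda>j. xs ! \<sigma> j)"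
        unfolding P_def
      proof (intro map_cong[OF refl] prod.cong[OF refl])
        fix i j assume "i \<in> set [0..<n]" "j \<in> GG alpha i"
        hence "j < k" using GG_sub[of i alpha] assms(2) k_def by auto
        hence "\<sigma> j < k" using permutes_in_image[OF s] by auto
        then show "ys ! (p \<circ> \<sigma>) j = xs ! \<sigma> j" using xsn by simp
      qed
      then show "F (P (\<lambda>j. ys ! (p \<circ> \<sigma>) j)) = F (P (\<lambda>j. xs ! \<sigma> j))" by simp
    qed
    finally show "A xs = A ys" unfolding A_def by simp
  qed
  have add: "k_additive K k A"
    unfolding k_additive_def
  proof (intro ballI allI impI)
    fix xs i a b assume xs: "xs \<in> tuples K k" and i: "i < k" and a: "a \<in> K" and b: "b \<in> K"
    have lx: "length xs = k" using xs by (simp add: tuples_def)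
    have trm: "F (P (\<lambda>j. xs[i := a + b] ! \<sigma> j)) = F (P (\<lambda>j. xs[i := a] ! \<sigma> j)) + F (P (\<lambda>j. xs[i := b] ! \<sigma> j))"
      if s: "\<sigma> permutes {..<k}" for \<sigma>
    proof -
      define y where "y = (\<lambda>j. xs ! \<sigma> j)"
      define q where "q = inv \<sigma> i"
      have upd: "(\<lambda>j. xs[i := w] ! \<sigma> j) = y(q := w)" for w
      proof
        fix j
        have "(\<sigma> j = i) = (j = q)" unfolding q_def using permutes_inv_eq[OF s] by metis
        then show "xs[i := w] ! \<sigma> j = (y(q := w)) j"
          using lx i by (auto simp: y_def nth_list_update)
      qed
      have yK: "\<forall>j<k. y j \<in> K"
      proof (intro allI impI)
        fix j assume "j < k"
        hence "\<sigma> j < k" using permutes_in_image[OF s] by auto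
        then show "y j \<in> K" using xs lx by (auto simp: y_def tuples_def)
      qed
      have "q < k" unfolding q_def using permutes_in_image[OF permutes_inv[OF s]] i by auto
      then obtain i0 where i0: "i0 < n" "q \<in> GG alpha i0"
        using GG_ex[of q alpha] k_def assms(2) by auto
      define c where "c = (\<Prod>j\<in>GG alpha i0 - {q}. y j)"
      have cK: "c \<in> K" unfolding c_def
      proof (rule prod_in[OF K], rule ballI)
        fix j assume "j \<in> GG alpha i0 - {q}"
        then show "y j \<in> K" using GG_sub[of i0 alpha] i0 yK assms(2) k_def by auto
      qed
      have acK: "a * c \<in> K" "b * c \<in> K" using a b cK K by (auto simp: complex_subfield_def)
      have Py: "P y \<in> tuples K n" using Pin yK by blast
      have "F (P (y(q := a + b))) = F ((P y)[i0 := a * c + b * c])"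
        using Pupd[OF i0] by (simp add: c_def distrib_right)
      also have "\<dots> = F ((P y)[i0 := a * c]) + F ((P y)[i0 := b * c])"
        by (rule addF[OF Py i0(1) acK])
      also have "\<dots> = F (P (y(q := a))) + F (P (y(q := b)))"
        using Pupd[OF i0] by (simp add: c_def)
      finally show ?thesis unfolding upd .
    qed
    have "(\<Sum>\<sigma>\<in>PS. F (P (\<lambda>j. xs[i := a + b] ! \<sigma> j))) =
          (\<Sum>\<sigma>\<in>PS. F (P (\<lambda>j. xs[i := a] ! \<sigma> j))) + (\<Sum>\<sigma>\<in>PS. F (P (\<lambda>j. xs[i := b] ! \<sigma> j)))"
      unfolding sum.distrib[symmetric] by (rule sum.cong[OF refl]) (simp add: PS_def trm)
    then show "A (xs[i := a + b]) = A (xs[i := a]) + A (xs[i := b])"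
      unfolding A_def by (simp add: add_divide_distrib)
  qed
  have diag: "F (map (\<lambda>a. x ^ a) alpha) = A (replicate k x)" for x
  proof -
    have "F (P (\<lambda>j. replicate k x ! \<sigma> j)) = F (map (\<lambda>a. x ^ a) alpha)" if s: "\<sigma> \<in> PS" for \<sigma>
    proof -
      have s: "\<sigma> permutes {..<k}" using s by (simp add: PS_def)
      have "P (\<lambda>j. replicate k x ! \<sigma> j) = map (\<lambda>a. x ^ a) alpha"
      proof (rule nth_equalityI)
        show "length (P (\<lambda>j. replicate k x ! \<sigma> j)) = length (map (\<lambda>a. x ^ a) alpha)"
          using assms(2) by (simp add: P_def)
      next
        fix i assume "i < length (P (\<lambda>j. replicate k x ! \<sigma> j))"
        hence i: "i < n" by (simp add: P_def)
        have "(\<Prod>j\<in>GG alpha i. replicate k x ! \<sigma> j) = (\<Prod>j\<in>GG alpha i. x)"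
        proof (rule prod.cong[OF refl])
          fix j assume "j \<in> GG alpha i"
          hence "j < k" using GG_sub[of i alpha] i assms(2) k_def by auto
          hence "\<sigma> j < k" using permutes_in_image[OF s] by auto
          then show "replicate k x ! \<sigma> j = x" by simp
        qed
        also have "\<dots> = x ^ (alpha ! i)" using card_GG[of i alpha] i assms(2) by simp
        finally show "P (\<lambda>j. replicate k x ! \<sigma> j) ! i = map (\<lambda>a. x ^ a) alpha ! i"
          using i assms(2) by (simp add: P_def)
      qed
      then show ?thesis by simp
    qed
    hence "(\<Sum>\<sigma>\<in>PS. F (P (\<lambda>j. replicate k x ! \<sigma> j))) = of_nat (card PS) * F (map (\<lambda>a. x ^ a) alpha)"
      by simp
    moreover have "card PS = fact k" unfolding PS_def by (rule card_permutations) auto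
    ultimately show ?thesis unfolding A_def by simp
  qed
  show ?thesis unfolding generalized_monomial_def k_def[symmetric]
    by (intro exI[of _ A] conjI sym add ballI diag)
qed

end
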